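(* It is undecidable whether, for an arbitrary ranked alphabet $\Sigma$, computable strong bimonoid $B$, and bottom-up deterministic $(\Sigma,B)$-wta $\mathcal{A}$, the Nerode $(\Sigma,B)$-algebra $\mathcal{N}(\mathcal{A})$ is finite.
   Context: Ranked alphabet $\Sigma$ ($\Sigma^{(0)}\ne\emptyset$), trees $T_\Sigma$. Strong bimonoid $(B,\oplus,\otimes,\mathbb{0},\mathbb{1})$: commutative monoid $(B,\oplus,\mathbb{0})$, monoid $(B,\otimes,\mathbb{1})$, $\mathbb{0}\ne\mathbb{1}$, $\mathbb{0}$ absorbing; computable if $B$ is recursive and $\oplus,\otimes$ are computable. $(\Sigma,B)$-wta $\mathcal{A}=(Q,\delta,F)$: $Q$ finite nonempty, $\delta_k:Q^k\times\Sigma^{(k)}\times Q\to B$, $F:Q\to B$; bottom-up deterministic if for all $k,\sigma,q_1,\dots,q_k$ at most one $q$ has $\delta_k(q_1\dots q_k,\sigma,q)\ne\mathbb{0}$. Vector algebra $\mathrm{V}(\mathcal{A})=(B^Q,\delta_{\mathcal{A}})$, $\delta_{\mathcal{A}}(\sigma)(v_1,\dots,v_k)_q=\bigoplus_{q_1,\dots,q_k}\big(\bigotimes_{i=1}^k(v_i)_{q_i}\big)\otimes\delta_k(q_1\dots q_k,\sigma,q)$. The Nerode algebra $\mathcal{N}(\mathcal{A})=(Q_{\mathcal{N}},\theta_{\mathcal{N}},F_{\mathcal{N}})$ has carrier $Q_{\mathcal{N}}$ the smallest subset of $B^Q$ closed under all $\delta_{\mathcal{A}}(\sigma)$ (equivalently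 the image of the unique homomorphism $T_\Sigma\to\mathrm{V}(\mathcal{A})$), restricted operations, and $(F_{\mathcal{N}})_v=\bigoplus_q v_q\otimes F_q$; it is finite if $Q_{\mathcal{N}}$ is finite. *)

theory Defs
  imports Main "HOL-Library.Nat_Bijection"
begin

datatype recf = Z | S | Proj nat | Cn recf "recf list" | Pr recf recf | Mn recf

text \<open>Big-step semantics: evaluation of a program on an argument list
  (the first argument is the recursion / minimisation variable).\<close>
inductive eval :: "recf \<Rightarrow> nat list \<Rightarrow> nat \<Rightarrow> bool" where
  eval_Z: "eval Z xs 0"
| eval_S: "eval S (x # xs) (Suc x)"
| eval_Proj: "i < length xs \<Longrightarrow> eval (Proj i) xs (xs ! i)"
| eval_Cn: "length ys = length gs \<Longrightarrow> (\<forall>i < length gs. eval (gs ! i) xs (ys ! i))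
     \<Longrightarrow> eval f ys z \<Longrightarrow> eval (Cn f gs) xs z"
| eval_Pr0: "eval f xs y \<Longrightarrow> eval (Pr f g) (0 # xs) y"
| eval_PrS: "eval (Pr f g) (n # xs) y \<Longrightarrow> eval g (y # n # xs) z
     \<Longrightarrow> eval (Pr f g) (Suc n # xs) z"
| eval_Mn: "eval f (n # xs) 0 \<Longrightarrow> (\<forall>m < n. \<exists>y. eval f (m # xs) y \<and> y \<noteq> 0)
     \<Longrightarrow> eval (Mn f) xs n"

fun enc_recf :: "recf \<Rightarrow> nat" where
  "enc_recf Z = prod_encode (0, 0)"
| "enc_recf S = prod_encode (1, 0)"
| "enc_recf (Proj i) = prod_encode (2, i)"
| "enc_recf (Cn f gs) = prod_encode (3, prod_encode (enc_recf f, list_encode (map enc_recf gs)))"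
| "enc_recf (Pr f g) = prod_encode (4, prod_encode (enc_recf f, enc_recf g))"
| "enc_recf (Mn f) = prod_encode (5, enc_recf f)"

text \<open>An instance consists of
  \<^item> a program deciding the carrier B \<subseteq> nat (value 1 = member, 0 = non-member),
  \<^item> programs computing the binary operations plus and times,
  \<^item> the elements zero and one,
  \<^item> a ranked alphabet: symbol i (i < length ranks) has rank ranks ! i,
  \<^item> the number nQ of states (states are 0..nQ-1),
  \<^item> a finite table of transition weights (qs, sigma, q, w); missing entries have weight zero,
  \<^item> the root weights F (list of length nQ).\<close>
datatype inst = Inst
  (carP: recf) (plusP: recf) (timesP: recf) (zeroI: nat) (oneI: nat)
  (ranksI: "nat list") (nQ: nat) (deltaT: "(nat list \<times> nat \<times> nat \<times> nat) list")
  (finI: "nat list")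

definition enc_inst :: "inst \<Rightarrow> nat" where
  "enc_inst I = list_encode
     [enc_recf (carP I), enc_recf (plusP I), enc_recf (timesP I), zeroI I, oneI I,
      list_encode (ranksI I), nQ I,
      list_encode (map (\<lambda>(qs, s, q, w). list_encode [list_encode qs, s, q, w]) (deltaT I)),
      list_encode (finI I)]"

definition carrier :: "inst \<Rightarrow> nat set" where
  "carrier I = {n. eval (carP I) [n] 1}"

definition plusI :: "inst \<Rightarrow> nat \<Rightarrow> nat \<Rightarrow> nat" where
  "plusI I a b = (THE c. eval (plusP I) [a, b] c)"

definition timesI :: "inst \<Rightarrow> nat \<Rightarrow> nat \<Rightarrow> nat" where
  "timesI I a b = (THE c. eval (timesP I) [a, b] c)"

definition deltaI :: "inst \<Rightarrow> nat list \<Rightarrow> nat \<Rightarrow> nat \<Rightarrow> nat" where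
  "deltaI I qs s q =
     (case find (\<lambda>(qs', s', q', w). qs' = qs \<and> s' = s \<and> q' = q) (deltaT I) of
        Some (_, _, _, w) \<Rightarrow> w
      | None \<Rightarrow> zeroI I)"

definition computable_bimonoid :: "inst \<Rightarrow> bool" where
  "computable_bimonoid I \<longleftrightarrow>
     (\<forall>n. \<exists>v. eval (carP I) [n] v \<and> v \<le> 1) \<and>
     (\<forall>a \<in> carrier I. \<forall>b \<in> carrier I. \<exists>c \<in> carrier I. eval (plusP I) [a, b] c) \<and>
     (\<forall>a \<in> carrier I. \<forall>b \<in> carrier I. \<exists>c \<in> carrier I. eval (timesP I) [a, b] c)"

definition strong_bimonoid :: "inst \<Rightarrow> bool" where
  "strong_bimonoid I \<longleftrightarrow>
     (let B = carrier I; p = plusI I; t = timesI I; z = zeroI I; e = oneI I in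
      z \<in> B \<and> e \<in> B \<and> z \<noteq> e \<and>
      (\<forall>a\<in>B. \<forall>b\<in>B. \<forall>c\<in>B. p (p a b) c = p a (p b c)) \<and>
      (\<forall>a\<in>B. \<forall>b\<in>B. p a b = p b a) \<and>
      (\<forall>a\<in>B. p a z = a) \<and>
      (\<forall>a\<in>B. \<forall>b\<in>B. \<forall>c\<in>B. t (t a b) c = t a (t b c)) \<and>
      (\<forall>a\<in>B. t a e = a \<and> t e a = a) \<and>
      (\<forall>a\<in>B. t a z = z \<and> t z a = z))"

definition ranked_alphabet :: "inst \<Rightarrow> bool" where
  "ranked_alphabet I \<longleftrightarrow> (\<exists>s < length (ranksI I). ranksI I ! s = 0)"

definition wta_ok :: "inst \<Rightarrow> bool" where
  "wta_ok I \<longleftrightarrow> nQ I > 0 \<and> length (finI I) = nQ I \<and> set (finI I) \<subseteq> carrier I \<and>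
     (\<forall>(qs, s, q, w) \<in> set (deltaT I). w \<in> carrier I)"

definition bu_deterministic :: "inst \<Rightarrow> bool" where
  "bu_deterministic I \<longleftrightarrow>
     (\<forall>s < length (ranksI I). \<forall>qs. length qs = ranksI I ! s \<and> set qs \<subseteq> {..<nQ I} \<longrightarrow>
        (\<forall>q < nQ I. \<forall>q' < nQ I. deltaI I qs s q \<noteq> zeroI I \<and> deltaI I qs s q' \<noteq> zeroI I
            \<longrightarrow> q = q'))"

definition valid_instance :: "inst \<Rightarrow> bool" where
  "valid_instance I \<longleftrightarrow> computable_bimonoid I \<and> strong_bimonoid I \<and> ranked_alphabet I \<and>
     wta_ok I \<and> bu_deterministic I"

datatype tree = Node nat "tree list"

fun wf_tree :: "inst \<Rightarrow> tree \<Rightarrow> bool" where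
  "wf_tree I (Node s ts) \<longleftrightarrow> s < length (ranksI I) \<and> length ts = ranksI I ! s \<and>
     (\<forall>t \<in> set ts. wf_tree I t)"

definition sumI :: "inst \<Rightarrow> nat list \<Rightarrow> nat" where
  "sumI I xs = foldr (plusI I) xs (zeroI I)"

definition prodI :: "inst \<Rightarrow> nat list \<Rightarrow> nat" where
  "prodI I xs = foldr (timesI I) xs (oneI I)"

text \<open>delta_A(sigma)(v_1,...,v_k)_q, vectors in B^Q as lists of length nQ.\<close>
definition vec_op :: "inst \<Rightarrow> nat \<Rightarrow> nat list list \<Rightarrow> nat list" where
  "vec_op I s vs = map (\<lambda>q. sumI I
      (map (\<lambda>qs. timesI I (prodI I (map (\<lambda>i. (vs ! i) ! (qs ! i)) [0..<length vs]))
                          (deltaI I qs s q))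
           (List.n_lists (length vs) [0..<nQ I]))) [0..<nQ I]"

text \<open>The unique homomorphism from the term algebra into V(A).\<close>
fun hvec :: "inst \<Rightarrow> tree \<Rightarrow> nat list" where
  "hvec I (Node s ts) = vec_op I s (map (hvec I) ts)"

definition nerode_carrier :: "inst \<Rightarrow> nat list set" where
  "nerode_carrier I = hvec I ` {t. wf_tree I t}"

end

theory Submission
  imports Defs
begin

lemma eval_det: "eval f xs v \<Longrightarrow> eval f xs v' \<Longrightarrow> v = v'"
proof (induction arbitrary: v' rule: eval.induct)
  case (eval_Z xs) from eval_Z.prems show ?case by (cases rule: eval.cases) auto
next
  case (eval_S x xs) from eval_S.prems show ?case by (cases rule: eval.cases) auto
next
  case (eval_Proj i xs) from eval_Proj.prems show ?case by (cases rule: eval.cases) auto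
next
  case (eval_Cn ys gs xs f z)
  from eval_Cn.prems show ?case
  proof (cases rule: eval.cases)
    case (eval_Cn ys')
    have "ys' = ys"
    proof (rule nth_equalityI)
      show "length ys' = length ys" using eval_Cn.hyps(1) local.eval_Cn by simp
      fix i assume "i < length ys'"
      then show "ys' ! i = ys ! i" using eval_Cn.IH(1) local.eval_Cn eval_Cn.hyps(1) by metis
    qed
    then show ?thesis using eval_Cn.IH(2) local.eval_Cn by auto
  qed
next
  case (eval_Pr0 f xs y g) from eval_Pr0.prems show ?case by (cases rule: eval.cases) (use eval_Pr0.IH in auto)
next
  case (eval_PrS f g n xs y z)
  from eval_PrS.prems show ?case by (cases rule: eval.cases) (use eval_PrS.IH in auto)
next
  case (eval_Mn f n xs)
  from eval_Mn.prems show ?case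
  proof (cases rule: eval.cases)
    case eval_Mn
    show ?thesis
    proof (rule ccontr)
      assume "n \<noteq> v'"
      then consider "n < v'" | "v' < n" by linarith
      then show False
      proof cases
        case 1
        then obtain y where "eval f (n # xs) y" "y \<noteq> 0" using eval_Mn by auto
        then show False using eval_Mn.IH(1) by auto
      next
        case 2
        then obtain y where "eval f (v' # xs) y" "y \<noteq> 0" "\<forall>y'. eval f (v' # xs) y' \<longrightarrow> y = y'"
          using eval_Mn.IH(2) by blast
        then show False using eval_Mn by auto
      qed
    qed
  qed
qed

lemma eval_det_dummy: "eval f xs v \<Longrightarrow> v = w \<Longrightarrow> eval f xs w" by simp

lemma evCn: "list_all2 (\<lambda>g y. eval g xs y) gs ys \<Longrightarrow> eval f ys z \<Longrightarrow> eval (Cn f gs) xs z"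
  by (rule eval_Cn) (auto simp: list_all2_conv_all_nth)

lemma evP: "i < length xs \<Longrightarrow> v = xs ! i \<Longrightarrow> eval (Proj i) xs v"
  using eval_Proj by simp

lemma evCn1: "eval g xs a \<Longrightarrow> eval f [a] z \<Longrightarrow> eval (Cn f [g]) xs z"
  by (rule evCn[where ys="[a]"]) auto
lemma evCn2: "eval g1 xs a \<Longrightarrow> eval g2 xs b \<Longrightarrow> eval f [a, b] z \<Longrightarrow> eval (Cn f [g1, g2]) xs z"
  by (rule evCn[where ys="[a, b]"]) auto
lemma evCn3: "eval g1 xs a \<Longrightarrow> eval g2 xs b \<Longrightarrow> eval g3 xs c \<Longrightarrow> eval f [a, b, c] z \<Longrightarrow> eval (Cn f [g1, g2, g3]) xs z"
  by (rule evCn[where ys="[a, b, c]"]) auto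

lemma evPr: "eval f ys (h 0) \<Longrightarrow> (\<And>j. j < n \<Longrightarrow> eval g (h j # j # ys) (h (Suc j))) \<Longrightarrow> eval (Pr f g) (n # ys) (h n)"
  by (induction n) (auto intro: eval_Pr0 eval_PrS)

lemma evProjs: "list_all2 (\<lambda>g y. eval g (as @ ys) y) (map Proj [length as..<length as + length ys]) ys"
  by (auto simp: list_all2_conv_all_nth nth_append intro!: evP)

primrec constp :: "nat \<Rightarrow> recf" where
  "constp 0 = Z"
| "constp (Suc c) = Cn S [constp c]"

lemma ev_const: "eval (constp c) xs c"
  by (induction c) (auto intro!: evCn eval_Z eval_S)

definition "ADD = Pr (Proj 0) (Cn S [Proj 0])"
definition "PRED = Pr Z (Proj 1)"
definition "MONUS = Pr (Proj 0) (Cn PRED [Proj 0])"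
definition "SUB = Cn MONUS [Proj 1, Proj 0]"
definition "MULT = Pr Z (Cn ADD [Proj 0, Proj 2])"
definition "IFZ = Pr (Proj 0) (Proj 3)"
definition "TRI = Pr Z (Cn ADD [Proj 0, Cn S [Proj 1]])"
definition "PE = Cn ADD [Cn TRI [Cn ADD [Proj 0, Proj 1]], Proj 0]"

lemma evS: "v = Suc x \<Longrightarrow> eval S (x # xs) v"
  using eval_S by simp
lemma evZ: "v = 0 \<Longrightarrow> eval Z xs v"
  using eval_Z by simp

lemma ev_ADD: "eval ADD (x # y # ys) (x + y)"
  unfolding ADD_def
  apply (rule evPr[where h="\<lambda>x. x + y"])
   apply (rule evP; simp)
  apply (rule evCn1)
   apply (rule evP; simp)
  apply (rule evS; simp)
  done

lemma ev_PRED: "eval PRED (x # ys) (x - 1)"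
  unfolding PRED_def
  apply (rule evPr[where h="\<lambda>x. x - 1"])
   apply (rule evZ; simp)
  apply (rule evP; simp)
  done

lemma ev_MONUS: "eval MONUS (y # x # ys) (x - y)"
  unfolding MONUS_def
  apply (rule evPr[where h="\<lambda>y. x - y"])
   apply (rule evP; simp)
  apply (rule evCn1)
   apply (rule evP; simp)
  apply (rule eval_det_dummy[OF ev_PRED]; simp)
  done

lemma ev_SUB: "eval SUB (x # y # ys) (x - y)"
  unfolding SUB_def
  apply (rule evCn2[where a=y and b=x])
    apply (rule evP; simp)
   apply (rule evP; simp)
  apply (rule ev_MONUS)
  done

lemma ev_MULT: "eval MULT (x # y # ys) (x * y)"
  unfolding MULT_def
  apply (rule evPr[where h="\<lambda>x. x * y"])
   apply (rule evZ; simp)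
  apply (rule evCn2)
    apply (rule evP; simp)
   apply (rule evP; simp)
  apply (rule eval_det_dummy[OF ev_ADD]; simp)
  done

lemma ev_IFZ: "eval IFZ (c # a # b # ys) (if c = 0 then a else b)"
  unfolding IFZ_def
  apply (rule evPr[where h="\<lambda>c. if c = 0 then a else b"])
   apply (rule evP; simp)
  apply (rule evP; simp)
  done

lemma ev_TRI: "eval TRI (n # ys) (triangle n)"
  unfolding TRI_def
  apply (rule evPr[where h="triangle"])
   apply (rule evZ; simp)
  apply (rule evCn2)
    apply (rule evP; simp)
   apply (rule evCn1)
    apply (rule evP; simp)
   apply (rule evS; simp)
  apply (rule eval_det_dummy[OF ev_ADD]; simp)
  done

lemma ev_PE: "eval PE (m # n # ys) (prod_encode (m, n))"
  unfolding PE_def prod_encode_def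
  apply (rule evCn2[where a="triangle (m+n)" and b=m])
    apply (rule evCn1[where a="m+n"])
     apply (rule evCn2[where a=m and b=n])
       apply (rule evP; simp)
      apply (rule evP; simp)
     apply (rule ev_ADD)
    apply (rule ev_TRI)
   apply (rule evP; simp)
  apply (simp add: ev_ADD)
  done


primrec prr :: "(nat list \<Rightarrow> nat) \<Rightarrow> (nat list \<Rightarrow> nat) \<Rightarrow> nat list \<Rightarrow> nat \<Rightarrow> nat" where
  "prr F G ys 0 = F ys"
| "prr F G ys (Suc j) = (let r = prr F G ys j in if r = 0 then 0 else G ((r - 1) # j # ys))"

primrec mnT :: "(nat list \<Rightarrow> nat) \<Rightarrow> nat list \<Rightarrow> nat \<Rightarrow> nat" where
  "mnT F xs 0 = 0"
| "mnT F xs (Suc j) = (let t = mnT F xs j in if t \<noteq> 0 then t else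
     (let r = F (j # xs) in if r = 0 then 1 else if r = 1 then j + 2 else 0))"

fun fv :: "recf \<Rightarrow> nat \<Rightarrow> nat list \<Rightarrow> nat" where
  "fv Z k xs = 1"
| "fv S k xs = (case xs of [] \<Rightarrow> 0 | x # _ \<Rightarrow> Suc (Suc x))"
| "fv (Proj i) k xs = (if i < length xs then Suc (xs ! i) else 0)"
| "fv (Cn f gs) k xs = (let rs = map (\<lambda>g. fv g k xs) gs in
      if 0 \<in> set rs then 0 else fv f k (map (\<lambda>r. r - 1) rs))"
| "fv (Pr f g) k xs = (case xs of [] \<Rightarrow> 0 | m # ys \<Rightarrow> prr (fv f k) (fv g k) ys m)"
| "fv (Mn f) k xs = mnT (fv f k) xs k - 1"

lemma mnT_zero: "mnT F xs j = 0 \<longleftrightarrow> (\<forall>i<j. F (i # xs) \<ge> 2)"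
proof (induction j)
  case 0 then show ?case by simp
next
  case (Suc j) then show ?case
    by (auto simp: Let_def less_Suc_eq)
qed

lemma mnT_found: "mnT F xs j = Suc (Suc m) \<longleftrightarrow> (m < j \<and> F (m # xs) = 1 \<and> (\<forall>i<m. F (i # xs) \<ge> 2))"
proof (induction j)
  case 0 then show ?case by simp
next
  case (Suc j)
  show ?case
  proof (cases "mnT F xs j = 0")
    case True
    then have A: "\<forall>i<j. F (i # xs) \<ge> 2" using mnT_zero by auto
    show ?thesis using True A
      by (auto simp: Let_def less_Suc_eq)
  next
    case False
    then have "\<not> (\<forall>i<j. F (i # xs) \<ge> 2)" using mnT_zero by auto
    then show ?thesis using Suc.IH False
      by (auto simp: Let_def less_Suc_eq)
  qed
qed

lemma prr_sound:
  assumes F: "\<And>ys v. F ys = Suc v \<Longrightarrow> eval f ys v"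
    and G: "\<And>ys v. G ys = Suc v \<Longrightarrow> eval g ys v"
  shows "prr F G ys m = Suc v \<Longrightarrow> eval (Pr f g) (m # ys) v"
proof (induction m arbitrary: v)
  case 0 then show ?case using F by (auto intro: eval_Pr0)
next
  case (Suc m)
  have "prr F G ys m \<noteq> 0" using Suc.prems by (auto simp: Let_def split: if_splits)
  then obtain r where r0: "prr F G ys m = Suc r" by (cases "prr F G ys m") auto
  then have r: "prr F G ys m = Suc r" "G (r # m # ys) = Suc v" using Suc.prems by (auto simp: Let_def)
  then show ?case using Suc.IH G by (auto intro: eval_PrS)
qed

lemma fv_sound: "fv f k xs = Suc v \<Longrightarrow> eval f xs v"
proof (induction f arbitrary: xs v)
  case Z then show ?case by (auto intro: evZ)
next
  case S then show ?case by (auto intro: evS split: list.splits)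
next
  case (Proj i) then show ?case by (auto intro: evP split: if_splits)
next
  case (Cn f gs)
  let ?rs = "map (\<lambda>g. fv g k xs) gs"
  have nz: "0 \<notin> set ?rs" and ff: "fv f k (map (\<lambda>r. r - 1) ?rs) = Suc v"
    using Cn.prems by (auto simp: Let_def split: if_splits)
  show ?case
  proof (rule evCn[OF _ Cn.IH(1)[OF ff]])
    show "list_all2 (\<lambda>g y. eval g xs y) gs (map (\<lambda>r. r - 1) ?rs)"
      unfolding list_all2_conv_all_nth
    proof (intro conjI allI impI)
      fix i assume i: "i < length gs"
      then have "fv (gs ! i) k xs = Suc (fv (gs ! i) k xs - 1)" using nz
        by (metis Suc_pred' length_map neq0_conv nth_map nth_mem)
      then show "eval (gs ! i) xs (map (\<lambda>r. r - 1) ?rs ! i)"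
        using Cn.IH(2)[OF nth_mem[OF i]] i by simp
    qed simp
  qed
next
  case (Pr f g)
  show ?case
  proof (cases xs)
    case Nil then show ?thesis using Pr.prems by simp
  next
    case (Cons m ys)
    show ?thesis unfolding Cons
      by (rule prr_sound[of "fv f k" f "fv g k" g ys m v]) (use Pr Cons in auto)
  qed
next
  case (Mn f)
  then have m: "mnT (fv f k) xs k = Suc (Suc v)" by simp
  then have "fv f k (v # xs) = Suc 0" "\<forall>i<v. fv f k (i # xs) \<ge> 2"
    unfolding mnT_found by auto
  then have A: "eval f (v # xs) 0" and B: "\<forall>i<v. \<exists>y. eval f (i # xs) y \<and> y \<noteq> 0"
  proof -
    show "eval f (v # xs) 0" using Mn.IH `fv f k (v # xs) = Suc 0` by blast
    show "\<forall>i<v. \<exists>y. eval f (i # xs) y \<and> y \<noteq> 0"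
    proof (intro allI impI)
      fix i assume "i < v"
      then have "fv f k (i # xs) \<ge> 2" using `\<forall>i<v. fv f k (i # xs) \<ge> 2` by blast
      then obtain y where "fv f k (i # xs) = Suc (Suc y)" by (metis add_2_eq_Suc le_Suc_ex)
      then show "\<exists>y. eval f (i # xs) y \<and> y \<noteq> 0" using Mn.IH by blast
    qed
  qed
  then show ?case by (rule eval_Mn)
qed

lemma prr_mono:
  assumes F: "\<And>ys v. F ys = Suc v \<Longrightarrow> F' ys = Suc v"
    and G: "\<And>ys v. G ys = Suc v \<Longrightarrow> G' ys = Suc v"
  shows "prr F G ys m = Suc v \<Longrightarrow> prr F' G' ys m = Suc v"
proof (induction m arbitrary: v)
  case 0 then show ?case using F by simp
next
  case (Suc m)
  have "prr F G ys m \<noteq> 0" using Suc.prems by (auto simp: Let_def split: if_splits)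
  then obtain r where r0: "prr F G ys m = Suc r" by (cases "prr F G ys m") auto
  then have r: "prr F G ys m = Suc r" "G (r # m # ys) = Suc v" using Suc.prems by (auto simp: Let_def)
  then show ?case using Suc.IH G by (simp add: Let_def)
qed

lemma fv_mono: "fv f k xs = Suc v \<Longrightarrow> k \<le> k' \<Longrightarrow> fv f k' xs = Suc v"
proof (induction f arbitrary: xs v)
  case Z then show ?case by simp
next
  case S then show ?case by simp
next
  case (Proj i) then show ?case by simp
next
  case (Cn f gs)
  let ?rs = "map (\<lambda>g. fv g k xs) gs"
  have nz: "0 \<notin> set ?rs" and ff: "fv f k (map (\<lambda>r. r - 1) ?rs) = Suc v"
    using Cn.prems by (auto simp: Let_def split: if_splits)
  have eq: "map (\<lambda>g. fv g k' xs) gs = ?rs"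
  proof (rule map_cong[OF refl])
    fix g assume g: "g \<in> set gs"
    then have "fv g k xs = Suc (fv g k xs - 1)" using nz by (metis Suc_pred' image_eqI list.set_map neq0_conv)
    then show "fv g k' xs = fv g k xs" using Cn.IH(2)[OF g] Cn.prems(2) by metis
  qed
  show ?case using nz ff Cn.IH(1)[OF ff Cn.prems(2)] by (simp add: eq Let_def)
next
  case (Pr f g)
  show ?case
  proof (cases xs)
    case Nil then show ?thesis using Pr.prems by simp
  next
    case (Cons m ys)
    have p: "prr (fv f k) (fv g k) ys m = Suc v" using Pr.prems Cons by simp
    have "prr (fv f k') (fv g k') ys m = Suc v"
      using prr_mono[OF _ _ p, of "fv f k'" "fv g k'"] Pr.IH Pr.prems(2) by blast
    then show ?thesis using Cons by simp
  qed
next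
  case (Mn f)
  then have m: "mnT (fv f k) xs k = Suc (Suc v)" by simp
  then have A: "v < k" "fv f k (v # xs) = Suc 0" "\<forall>i<v. fv f k (i # xs) \<ge> 2"
    unfolding mnT_found by auto
  have "\<forall>i<v. fv f k' (i # xs) \<ge> 2"
  proof (intro allI impI)
    fix i assume "i < v"
    then have "fv f k (i # xs) \<ge> 2" using A by blast
    then obtain y where "fv f k (i # xs) = Suc (Suc y)" by (metis add_2_eq_Suc le_Suc_ex)
    then show "fv f k' (i # xs) \<ge> 2" using Mn.IH Mn.prems(2) by fastforce
  qed
  moreover have "fv f k' (v # xs) = Suc 0" using Mn.IH A Mn.prems(2) by blast
  ultimately have "mnT (fv f k') xs k' = Suc (Suc v)" unfolding mnT_found using A Mn.prems(2) by auto
  then show ?case by simp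
qed

lemma bound_exists:
  fixes n :: nat and P :: "nat \<Rightarrow> nat \<Rightarrow> bool"
  assumes "\<forall>i<n. \<exists>k. P i k" and "\<And>i k k'. P i k \<Longrightarrow> k \<le> k' \<Longrightarrow> P i k'"
  shows "\<exists>K. \<forall>i<n. \<forall>k\<ge>K. P i k"
  using assms(1)
proof (induction n)
  case 0 then show ?case by simp
next
  case (Suc n)
  then obtain K where K: "\<forall>i<n. \<forall>k\<ge>K. P i k" by auto
  obtain k0 where "P n k0" using Suc.prems by auto
  then have "\<forall>i<Suc n. \<forall>k\<ge>max K k0. P i k" using K assms(2) by (auto simp: less_Suc_eq)
  then show ?case by blast
qed


lemma fv_complete: "eval f xs v \<Longrightarrow> \<exists>k. fv f k xs = Suc v"
proof (induction rule: eval.induct)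
  case (eval_Z xs) then show ?case by simp
next
  case (eval_S x xs) then show ?case by simp
next
  case (eval_Proj i xs) then show ?case by simp
next
  case (eval_Cn ys gs xs f z)
  obtain K where K: "\<forall>i<length gs. \<forall>k\<ge>K. fv (gs ! i) k xs = Suc (ys ! i)"
    using bound_exists[of "length gs" "\<lambda>i k. fv (gs ! i) k xs = Suc (ys ! i)"] eval_Cn.IH(1) fv_mono
    by blast
  obtain k1 where k1: "fv f k1 ys = Suc z" using eval_Cn.IH(2) by blast
  let ?k = "max K k1"
  have rs: "map (\<lambda>g. fv g ?k xs) gs = map Suc ys"
    by (rule nth_equalityI) (use K eval_Cn.hyps(1) in auto)
  have "fv f ?k ys = Suc z" using fv_mono[OF k1] by simp
  then have "fv (Cn f gs) ?k xs = Suc z" by (simp add: rs comp_def)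
  then show ?case by blast
next
  case (eval_Pr0 f xs y g)
  then show ?case by simp
next
  case (eval_PrS f g n xs y z)
  obtain k1 where k1: "fv (Pr f g) k1 (n # xs) = Suc y" using eval_PrS.IH by blast
  obtain k2 where k2: "fv g k2 (y # n # xs) = Suc z" using eval_PrS.IH by blast
  let ?k = "max k1 k2"
  have "fv (Pr f g) ?k (n # xs) = Suc y" using fv_mono[OF k1] by simp
  moreover have "fv g ?k (y # n # xs) = Suc z" using fv_mono[OF k2] by simp
  ultimately have "fv (Pr f g) ?k (Suc n # xs) = Suc z" by (simp add: Let_def)
  then show ?case by blast
next
  case (eval_Mn f n xs)
  obtain k0 where k0: "fv f k0 (n # xs) = Suc 0" using eval_Mn.IH by blast
  have "\<forall>i<n. \<exists>k. \<exists>y. fv f k (i # xs) = Suc y \<and> y \<noteq> 0" using eval_Mn.IH by blast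
  then obtain K where K: "\<forall>i<n. \<forall>k\<ge>K. \<exists>y. fv f k (i # xs) = Suc y \<and> y \<noteq> 0"
    using bound_exists[of n "\<lambda>i k. \<exists>y. fv f k (i # xs) = Suc y \<and> y \<noteq> 0"] fv_mono
    by blast
  let ?k = "max (max K k0) (Suc n)"
  have "\<forall>i<n. fv f ?k (i # xs) \<ge> 2" using K
    by (metis Suc_le_eq less_Suc0 max.cobounded1 max.coboundedI1 not_less numeral_2_eq_2)
  moreover have "fv f ?k (n # xs) = Suc 0" using fv_mono[OF k0] by simp
  ultimately have "mnT (fv f ?k) xs ?k = Suc (Suc n)" unfolding mnT_found by auto
  then have "fv (Mn f) ?k xs = Suc n" by simp
  then show ?case by blast
qed

lemma evProjs': "a = length as \<Longrightarrow> b = length as + length ys \<Longrightarrow> xs = as @ ys \<Longrightarrow> list_all2 (\<lambda>g y. eval g xs y) (map Proj [a..<b]) ys"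
  using evProjs by simp

fun prodall :: "recf list \<Rightarrow> recf" where
  "prodall [] = constp 1"
| "prodall (g # gs) = Cn MULT [g, prodall gs]"

lemma ev_prodall: "list_all2 (\<lambda>g y. eval g xs y) gs ys \<Longrightarrow> eval (prodall gs) xs (prod_list ys)"
proof (induction gs arbitrary: ys)
  case Nil then show ?case using ev_const[of 1 xs] by simp
next
  case (Cons g gs)
  then obtain y ys' where ys: "ys = y # ys'" "eval g xs y" "list_all2 (\<lambda>g y. eval g xs y) gs ys'"
    by (cases ys) auto
  show ?case unfolding ys(1) using ys(2) Cons.IH[OF ys(3)]
    by (auto intro!: evCn2 ev_MULT)
qed

fun fuel :: "nat \<Rightarrow> recf \<Rightarrow> recf" where
  "fuel n Z = constp 1"
| "fuel n S = (if n = 0 then Z else Cn S [Cn S [Proj 1]])"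
| "fuel n (Proj i) = (if i < n then Cn S [Proj (Suc i)] else Z)"
| "fuel n (Cn f gs) = Cn IFZ [prodall (map (fuel n) gs), Z,
     Cn (fuel (length gs) f) (Proj 0 # map (\<lambda>g. Cn PRED [fuel n g]) gs)]"
| "fuel 0 (Pr f g) = Z"
| "fuel (Suc n) (Pr f g) = Cn (Pr (fuel n f)
     (Cn IFZ [Proj 0, Z, Cn (fuel (Suc (Suc n)) g) (Proj 2 # Cn PRED [Proj 0] # Proj 1 # map Proj [3..<n+3])]))
     (Proj 1 # Proj 0 # map Proj [2..<n+2])"
| "fuel n (Mn f) = Cn PRED [Cn (Pr Z (Cn IFZ [Proj 0,
     Cn IFZ [Cn (fuel (Suc n) f) (Proj 2 # Proj 1 # map Proj [3..<n+3]), constp 1,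
             Cn IFZ [Cn PRED [Cn (fuel (Suc n) f) (Proj 2 # Proj 1 # map Proj [3..<n+3])], Cn S [Cn S [Proj 1]], Z]],
     Proj 0])) (Proj 0 # Proj 0 # map Proj [1..<n+1])]"

lemma ev_SS: "eval (Cn S [Cn S [Proj 1]]) (a # b # xs) (Suc (Suc b))"
  by (rule evCn1[OF evCn1[OF evP evS] evS]) auto

lemma fuel_correct: "length xs = n \<Longrightarrow> eval (fuel n f) (k # xs) (fv f k xs)"
proof (induction f arbitrary: n xs)
  case Z then show ?case using ev_const[of 1 "k # xs"] by simp
next
  case S then show ?case
    by (cases xs) (auto intro!: evZ evCn1 evS evP)
next
  case (Proj i) then show ?case
    by (auto intro!: evZ evCn1 evS evP)
next
  case (Cn f gs)
  let ?rs = "map (\<lambda>g. fv g k xs) gs"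
  have L: "list_all2 (\<lambda>g y. eval g (k # xs) y) (map (fuel n) gs) ?rs"
    using Cn.IH(2) Cn.prems by (auto simp: list_all2_conv_all_nth)
  have L2: "list_all2 (\<lambda>g y. eval g (k # xs) y) (Proj 0 # map (\<lambda>g. Cn PRED [fuel n g]) gs) (k # map (\<lambda>r. r - 1) ?rs)"
  proof -
    have "list_all2 (\<lambda>g y. eval g (k # xs) y) (map (\<lambda>g. Cn PRED [fuel n g]) gs) (map (\<lambda>r. r - 1) ?rs)"
      unfolding list_all2_conv_all_nth
    proof (intro conjI allI impI)
      fix i assume i: "i < length (map (\<lambda>g. Cn PRED [fuel n g]) gs)"
      then have "eval (fuel n (gs ! i)) (k # xs) (fv (gs ! i) k xs)" using Cn.IH(2) Cn.prems by simp
      then show "eval (map (\<lambda>g. Cn PRED [fuel n g]) gs ! i) (k # xs) (map (\<lambda>r. r - 1) ?rs ! i)"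
        using i by (auto intro!: evCn1 eval_det_dummy[OF ev_PRED])
    qed simp
    then show ?thesis by (auto intro!: evP)
  qed
  have E3: "eval (Cn (fuel (length gs) f) (Proj 0 # map (\<lambda>g. Cn PRED [fuel n g]) gs)) (k # xs)
      (fv f k (map (\<lambda>r. r - 1) ?rs))"
    by (rule evCn[OF L2]) (rule Cn.IH(1), simp)
  show ?case
    unfolding fuel.simps
    apply (rule evCn3[OF ev_prodall[OF L] evZ[OF refl] E3])
    apply (rule eval_det_dummy[OF ev_IFZ])
    apply (simp add: Let_def prod_list_zero_iff)
    done
next
  case (Pr f g)
  show ?case
  proof (cases n)
    case 0 then show ?thesis using Pr.prems by (auto intro: evZ)
  next
    case (Suc n')
    then obtain m ys where xs: "xs = m # ys" and ly: "length ys = n'" using Pr.prems by (cases xs) auto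
    let ?h = "prr (fv f k) (fv g k) ys"
    let ?G = "Cn IFZ [Proj 0, Z, Cn (fuel (Suc (Suc n')) g) (Proj 2 # Cn PRED [Proj 0] # Proj 1 # map Proj [3..<n'+3])]"
    have P: "eval (Pr (fuel n' f) ?G) (m # k # ys) (?h m)"
    proof (rule evPr)
      show "eval (fuel n' f) (k # ys) (?h 0)" using Pr.IH(1)[OF ly] by simp
      fix j
      have L: "list_all2 (\<lambda>g y. eval g (?h j # j # k # ys) y) (Proj 2 # Cn PRED [Proj 0] # Proj 1 # map Proj [3..<n'+3])
          (k # (?h j - 1) # j # ys)"
        using evProjs'[of 3 "[?h j, j, k]" "n' + 3" ys] ly
        by (auto intro!: evP evCn1 eval_det_dummy[OF ev_PRED])
      have "eval (Cn (fuel (Suc (Suc n')) g) (Proj 2 # Cn PRED [Proj 0] # Proj 1 # map Proj [3..<n'+3]))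
         (?h j # j # k # ys) (fv g k ((?h j - 1) # j # ys))"
        by (rule evCn[OF L], rule Pr.IH(2)) (simp add: ly)
      then show "eval ?G (?h j # j # k # ys) (?h (Suc j))"
        by (auto intro!: evCn3 evP evZ eval_det_dummy[OF ev_IFZ] simp: Let_def)
    qed
    have L: "list_all2 (\<lambda>g y. eval g (k # m # ys) y) (Proj 1 # Proj 0 # map Proj [2..<n'+2]) (m # k # ys)"
      using evProjs'[of 2 "[k, m]" "n' + 2" ys] ly by (auto intro!: evP)
    show ?thesis unfolding xs Suc fuel.simps using evCn[OF L P] by simp
  qed
next
  case (Mn f)
  let ?h = "mnT (fv f k) xs"
  let ?R = "Cn (fuel (Suc n) f) (Proj 2 # Proj 1 # map Proj [3..<n+3])"
  let ?ST = "Cn IFZ [?R, constp 1, Cn IFZ [Cn PRED [?R], Cn S [Cn S [Proj 1]], Z]]"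
  let ?G = "Cn IFZ [Proj 0, ?ST, Proj 0]"
  have P: "eval (Pr Z ?G) (k # k # xs) (?h k)"
  proof (rule evPr[where h="mnT (fv f k) xs"])
    show "eval Z (k # xs) (?h 0)" by (simp add: evZ)
    fix j
    have L: "list_all2 (\<lambda>g y. eval g (?h j # j # k # xs) y) (Proj 2 # Proj 1 # map Proj [3..<n+3]) (k # j # xs)"
      using evProjs'[of 3 "[?h j, j, k]" "n + 3" xs] Mn.prems by (auto intro!: evP)
    have R: "eval ?R (?h j # j # k # xs) (fv f k (j # xs))"
      using evCn[OF L Mn.IH[of "j # xs" "Suc n"]] Mn.prems by simp
    have ST: "eval ?ST (?h j # j # k # xs)
       (if fv f k (j # xs) = 0 then 1 else if fv f k (j # xs) - 1 = 0 then Suc (Suc j) else 0)"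
      apply (rule evCn3[OF R ev_const])
       apply (rule evCn3[OF evCn1[OF R ev_PRED]])
         apply (rule ev_SS)
        apply (rule evZ, rule refl)
       apply (rule ev_IFZ)
      apply (rule eval_det_dummy[OF ev_IFZ])
      apply simp
      done
    show "eval ?G (?h j # j # k # xs) (?h (Suc j))"
      apply (rule evCn3[OF _ ST])
        apply (rule evP, simp, simp)
       apply (rule evP, simp, simp)
      apply (rule eval_det_dummy[OF ev_IFZ])
      apply (auto simp: Let_def)
      done
  qed
  have L: "list_all2 (\<lambda>g y. eval g (k # xs) y) (Proj 0 # Proj 0 # map Proj [1..<n+1]) (k # k # xs)"
    using evProjs'[of 1 "[k]" "n + 1" xs] Mn.prems by (auto intro!: evP)
  show ?case unfolding fuel.simps
    apply (rule evCn1[OF evCn[OF L P]])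
    apply (rule eval_det_dummy[OF ev_PRED])
    apply simp
    done
qed


section \<open>Decoding pairs\<close>

definition dK :: "nat \<Rightarrow> nat" where "dK p = (LEAST t. p < triangle (Suc t))"
definition dfst :: "nat \<Rightarrow> nat" where "dfst p = p - triangle (dK p)"
definition dsnd :: "nat \<Rightarrow> nat" where "dsnd p = dK p - dfst p"

lemma triangle_ge: "n \<le> triangle n"
  by (induction n) auto

lemma dK_props: "p < triangle (Suc (dK p))" "triangle (dK p) \<le> p"
proof -
  have ex: "p < triangle (Suc p)" using triangle_ge[of "Suc p"] by simp
  show A: "p < triangle (Suc (dK p))" unfolding dK_def by (rule LeastI[of _ p]) (rule ex)
  show "triangle (dK p) \<le> p"
  proof (cases "dK p")
    case 0 then show ?thesis by simp
  next
    case (Suc K)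
    have "\<not> p < triangle (Suc K)"
    proof
      assume "p < triangle (Suc K)"
      then have "dK p \<le> K" unfolding dK_def by (rule Least_le)
      then show False using Suc by simp
    qed
    then show ?thesis using Suc by simp
  qed
qed

lemma pe_dec: "prod_encode (dfst p, dsnd p) = p"
proof -
  have "dfst p \<le> dK p" using dK_props[of p] unfolding dfst_def by simp
  then show ?thesis using dK_props[of p] unfolding prod_encode_def dsnd_def dfst_def by simp
qed

lemma dec_pe: "dfst (prod_encode (a, b)) = a" "dsnd (prod_encode (a, b)) = b"
  using pe_dec[of "prod_encode (a, b)"] by (simp_all add: prod_encode_eq)

definition "DKH = Cn SUB [Cn S [Proj 1], Cn TRI [Cn S [Proj 0]]]"
definition "DK = Mn DKH"
definition "DFST = Cn SUB [Proj 0, Cn TRI [DK]]"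
definition "DSND = Cn SUB [DK, DFST]"

lemma ev_DKH: "eval DKH (t # p # ys) (Suc p - triangle (Suc t))"
proof -
  have 1: "eval (Cn S [Proj 1]) (t # p # ys) (Suc p)" by (rule evCn1[OF evP evS]) auto
  have 2: "eval (Cn S [Proj 0]) (t # p # ys) (Suc t)" by (rule evCn1[OF evP evS]) auto
  show ?thesis unfolding DKH_def by (rule evCn2[OF 1 evCn1[OF 2 ev_TRI] ev_SUB])
qed

lemma ev_DK: "eval DK (p # ys) (dK p)"
  unfolding DK_def
proof (rule eval_Mn)
  show "eval DKH (dK p # p # ys) 0" using eval_det_dummy[OF ev_DKH] dK_props(1)[of p] by simp
  show "\<forall>m<dK p. \<exists>y. eval DKH (m # p # ys) y \<and> y \<noteq> 0"
  proof (intro allI impI)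
    fix m assume "m < dK p"
    then have "\<not> p < triangle (Suc m)" unfolding dK_def using not_less_Least by blast
    then show "\<exists>y. eval DKH (m # p # ys) y \<and> y \<noteq> 0" using ev_DKH by fastforce
  qed
qed

lemma ev_DFST: "eval DFST (p # ys) (dfst p)"
proof -
  have 1: "eval (Proj 0) (p # ys) p" by (rule evP) auto
  show ?thesis unfolding DFST_def dfst_def by (rule evCn2[OF 1 evCn1[OF ev_DK ev_TRI] ev_SUB])
qed

lemma ev_DSND: "eval DSND (p # ys) (dsnd p)"
  unfolding DSND_def dsnd_def
  by (rule evCn2[OF ev_DK ev_DFST]) (simp add: ev_SUB)

fun LEP :: "recf list \<Rightarrow> recf" where
  "LEP [] = Z"
| "LEP (g # gs) = Cn S [Cn PE [g, LEP gs]]"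

lemma ev_LEP: "list_all2 (\<lambda>g y. eval g xs y) gs ys \<Longrightarrow> eval (LEP gs) xs (list_encode ys)"
proof (induction gs arbitrary: ys)
  case Nil then show ?case by (auto intro: evZ)
next
  case (Cons g gs)
  then obtain y ys' where ys: "ys = y # ys'" "eval g xs y" "list_all2 (\<lambda>g y. eval g xs y) gs ys'"
    by (cases ys) auto
  show ?case unfolding ys(1) using ys(2) Cons.IH[OF ys(3)]
    by (auto intro!: evCn1 evCn2 ev_PE evS)
qed

definition "CARP = constp 1"
definition el :: "nat \<Rightarrow> nat \<Rightarrow> nat" where "el w s = 2 + prod_encode (w, s)"
definition EI :: "nat \<Rightarrow> nat" where
  "EI w = list_encode [enc_recf CARP, enc_recf ADD, w, 0, 1, list_encode [0, 1], 1,
     list_encode [list_encode [list_encode [], 0, 0, el w 0], list_encode [list_encode [0], 1, 0, el w 1]],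
     list_encode [1]]"
definition "ELP gw gs = Cn ADD [constp 2, Cn PE [gw, gs]]"
definition "EIP = LEP [constp (enc_recf CARP), constp (enc_recf ADD), Proj 0, constp 0, constp 1,
   constp (list_encode [0,1]), constp 1,
   LEP [LEP [constp (list_encode []), constp 0, constp 0, ELP (Proj 0) (constp 0)],
        LEP [constp (list_encode [0]), constp 1, constp 0, ELP (Proj 0) (constp 1)]],
   constp (list_encode [1])]"

lemma la2_Cons: "P x y \<Longrightarrow> list_all2 P xs ys \<Longrightarrow> list_all2 P (x # xs) (y # ys)" by simp
lemma la2_Nil: "list_all2 P [] []" by simp

lemma ev_ELP: "eval gw xs w \<Longrightarrow> eval gs xs s \<Longrightarrow> eval (ELP gw gs) xs (el w s)"
  unfolding ELP_def el_def by (rule evCn2[OF ev_const evCn2 ev_ADD]) (auto intro: ev_PE)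

lemma ev_EIP: "eval EIP (w # ys) (EI w)"
proof -
  have w: "eval (Proj 0) (w # ys) w" by (rule evP) auto
  show ?thesis unfolding EIP_def EI_def
    by (intro ev_LEP la2_Cons la2_Nil ev_const w ev_ELP)
qed

primrec cntP :: "(nat \<Rightarrow> bool) \<Rightarrow> nat \<Rightarrow> nat" where
  "cntP P 0 = 0"
| "cntP P (Suc n) = cntP P n + (if P n then 1 else 0)"

definition G :: "recf \<Rightarrow> nat \<Rightarrow> nat \<Rightarrow> nat" where "G d k w = fv d k [EI w]"
definition cnt :: "recf \<Rightarrow> nat \<Rightarrow> nat \<Rightarrow> nat" where "cnt d w = cntP (\<lambda>k. G d k w \<le> 1)"

definition "LE1 = Cn IFZ [Cn PRED [Proj 0], constp 1, Z]"
definition "CNTP d = Pr Z (Cn ADD [Proj 0, Cn LE1 [Cn (fuel 1 d) [Proj 1, Cn EIP [Proj 2]]]])"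

lemma ev_LE1: "eval LE1 (x # ys) (if x \<le> 1 then 1 else 0)"
proof -
  have 1: "eval (Cn PRED [Proj 0]) (x # ys) (x - 1)" by (rule evCn1[OF evP ev_PRED]) auto
  show ?thesis unfolding LE1_def
    by (rule evCn3[OF 1 ev_const evZ[OF refl]], rule eval_det_dummy[OF ev_IFZ]) auto
qed

lemma ev_CNTP: "eval (CNTP d) (s # w # ys) (cnt d w s)"
  unfolding CNTP_def
proof (rule evPr[where h="cnt d w"])
  show "eval Z (w # ys) (cnt d w 0)" by (rule evZ) (simp add: cnt_def)
  fix j
  let ?X = "cnt d w j # j # w # ys"
  have e: "eval (Cn EIP [Proj 2]) ?X (EI w)" by (rule evCn1[OF evP ev_EIP]) auto
  have j: "eval (Proj 1) ?X j" by (rule evP) auto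
  have f: "eval (Cn (fuel 1 d) [Proj 1, Cn EIP [Proj 2]]) ?X (G d j w)"
    unfolding G_def by (rule evCn2[OF j e]) (rule fuel_correct, simp)
  have c: "eval (Proj 0) ?X (cnt d w j)" by (rule evP) auto
  show "eval (Cn ADD [Proj 0, Cn LE1 [Cn (fuel 1 d) [Proj 1, Cn EIP [Proj 2]]]]) ?X (cnt d w (Suc j))"
    by (rule evCn2[OF c evCn1[OF f ev_LE1]], rule eval_det_dummy[OF ev_ADD]) (simp add: cnt_def)
qed

definition tm :: "recf \<Rightarrow> nat \<Rightarrow> nat \<Rightarrow> nat" where
  "tm d x y = (if x = 0 then 0 else if y = 0 then 0 else if x - 1 = 0 then y else if y - 1 = 0 then x else
     (if (dfst (x - 2) - dfst (y - 2)) + (dfst (y - 2) - dfst (x - 2)) = 0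
      then el (dfst (x - 2)) (cnt d (dfst (x - 2)) (dsnd (x - 2) + dsnd (y - 2))) else 0))"

definition "GENP d = (let A = Cn SUB [Proj 0, constp 2]; B = Cn SUB [Proj 1, constp 2];
   W1 = Cn DFST [A]; S1 = Cn DSND [A]; W2 = Cn DFST [B]; S2 = Cn DSND [B] in
   Cn IFZ [Cn ADD [Cn SUB [W1, W2], Cn SUB [W2, W1]],
           ELP W1 (Cn (CNTP d) [Cn ADD [S1, S2], W1]), Z])"

definition "PP d = Cn IFZ [Proj 0, Z, Cn IFZ [Proj 1, Z, Cn IFZ [Cn PRED [Proj 0], Proj 1,
   Cn IFZ [Cn PRED [Proj 1], Proj 0, GENP d]]]]"

lemma ev_GENP: "eval (GENP d) (x # y # ys)
   (if (dfst (x - 2) - dfst (y - 2)) + (dfst (y - 2) - dfst (x - 2)) = 0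
      then el (dfst (x - 2)) (cnt d (dfst (x - 2)) (dsnd (x - 2) + dsnd (y - 2))) else 0)"
proof -
  let ?X = "x # y # ys"
  have A: "eval (Cn SUB [Proj 0, constp 2]) ?X (x - 2)" by (rule evCn2[OF evP ev_const ev_SUB]) auto
  have B: "eval (Cn SUB [Proj 1, constp 2]) ?X (y - 2)" by (rule evCn2[OF evP ev_const ev_SUB]) auto
  have W1: "eval (Cn DFST [Cn SUB [Proj 0, constp 2]]) ?X (dfst (x - 2))" by (rule evCn1[OF A ev_DFST])
  have W2: "eval (Cn DFST [Cn SUB [Proj 1, constp 2]]) ?X (dfst (y - 2))" by (rule evCn1[OF B ev_DFST])
  have S1: "eval (Cn DSND [Cn SUB [Proj 0, constp 2]]) ?X (dsnd (x - 2))" by (rule evCn1[OF A ev_DSND])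
  have S2: "eval (Cn DSND [Cn SUB [Proj 1, constp 2]]) ?X (dsnd (y - 2))" by (rule evCn1[OF B ev_DSND])
  have D: "eval (Cn ADD [Cn SUB [Cn DFST [Cn SUB [Proj 0, constp 2]], Cn DFST [Cn SUB [Proj 1, constp 2]]],
                        Cn SUB [Cn DFST [Cn SUB [Proj 1, constp 2]], Cn DFST [Cn SUB [Proj 0, constp 2]]]]) ?X
      ((dfst (x - 2) - dfst (y - 2)) + (dfst (y - 2) - dfst (x - 2)))"
    by (rule evCn2[OF evCn2[OF W1 W2 ev_SUB] evCn2[OF W2 W1 ev_SUB] ev_ADD])
  have R: "eval (ELP (Cn DFST [Cn SUB [Proj 0, constp 2]])
      (Cn (CNTP d) [Cn ADD [Cn DSND [Cn SUB [Proj 0, constp 2]], Cn DSND [Cn SUB [Proj 1, constp 2]]],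
                    Cn DFST [Cn SUB [Proj 0, constp 2]]])) ?X
      (el (dfst (x - 2)) (cnt d (dfst (x - 2)) (dsnd (x - 2) + dsnd (y - 2))))"
    by (rule ev_ELP[OF W1 evCn2[OF evCn2[OF S1 S2 ev_ADD] W1 ev_CNTP]])
  show ?thesis unfolding GENP_def Let_def
    by (rule evCn3[OF D R evZ[OF refl] ev_IFZ])
qed

lemma ev_PP: "eval (PP d) (x # y # ys) (tm d x y)"
proof -
  let ?X = "x # y # ys"
  have X: "eval (Proj 0) ?X x" "eval (Proj 1) ?X y" by (auto intro: evP)
  have PX: "eval (Cn PRED [Proj 0]) ?X (x - 1)" by (rule evCn1[OF X(1) ev_PRED])
  have PY: "eval (Cn PRED [Proj 1]) ?X (y - 1)" by (rule evCn1[OF X(2) ev_PRED])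
  have I4: "eval (Cn IFZ [Cn PRED [Proj 1], Proj 0, GENP d]) ?X
     (if y - 1 = 0 then x else (if (dfst (x - 2) - dfst (y - 2)) + (dfst (y - 2) - dfst (x - 2)) = 0
      then el (dfst (x - 2)) (cnt d (dfst (x - 2)) (dsnd (x - 2) + dsnd (y - 2))) else 0))"
    by (rule evCn3[OF PY X(1) ev_GENP ev_IFZ])
  have I3: "eval (Cn IFZ [Cn PRED [Proj 0], Proj 1, Cn IFZ [Cn PRED [Proj 1], Proj 0, GENP d]]) ?X
     (if x - 1 = 0 then y else if y - 1 = 0 then x else (if (dfst (x - 2) - dfst (y - 2)) + (dfst (y - 2) - dfst (x - 2)) = 0
      then el (dfst (x - 2)) (cnt d (dfst (x - 2)) (dsnd (x - 2) + dsnd (y - 2))) else 0))"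
    by (rule evCn3[OF PX X(2) I4 ev_IFZ])
  have I2: "eval (Cn IFZ [Proj 1, Z, Cn IFZ [Cn PRED [Proj 0], Proj 1, Cn IFZ [Cn PRED [Proj 1], Proj 0, GENP d]]]) ?X
     (if y = 0 then 0 else if x - 1 = 0 then y else if y - 1 = 0 then x else (if (dfst (x - 2) - dfst (y - 2)) + (dfst (y - 2) - dfst (x - 2)) = 0
      then el (dfst (x - 2)) (cnt d (dfst (x - 2)) (dsnd (x - 2) + dsnd (y - 2))) else 0))"
    by (rule evCn3[OF X(2) evZ[OF refl] I3 ev_IFZ])
  show ?thesis unfolding PP_def tm_def
    by (rule evCn3[OF X(1) evZ[OF refl] I2 ev_IFZ])
qed

section \<open>Algebra of tm\<close>

lemma el_ne: "el w s \<noteq> 0" "el w s \<noteq> 1" "el w s \<noteq> Suc 0" "el w s - 1 \<noteq> 0" "el w s - 2 = prod_encode (w, s)"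
   "\<not> el w s \<le> Suc 0"
  by (auto simp: el_def)

lemma el_inj: "el w s = el w' s' \<longleftrightarrow> w = w' \<and> s = s'"
  by (auto simp: el_def prod_encode_eq)

lemma el_cases: obtains "x = 0" | "x = 1" | w s where "x = el w s"
proof -
  consider "x = 0" | "x = 1" | "x \<ge> 2" by linarith
  then show ?thesis
  proof cases
    case 3
    then have "x = el (dfst (x - 2)) (dsnd (x - 2))" unfolding el_def pe_dec by simp
    then show ?thesis using that by blast
  qed (use that in auto)
qed

lemma tm_simps: "tm d 0 y = 0" "tm d x 0 = 0" "tm d 1 y = y" "tm d x 1 = x" "tm d (Suc 0) y = y" "tm d x (Suc 0) = x"
  by (auto simp: tm_def)

lemma tm_el: "tm d (el w1 s1) (el w2 s2) = (if w1 = w2 then el w1 (cnt d w1 (s1 + s2)) else 0)"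
proof -
  have e: "(a - b) + (b - a) = 0 \<longleftrightarrow> a = b" for a b :: nat by arith
  show ?thesis unfolding tm_def by (simp add: el_ne dec_pe e)
qed

lemma cntP_all: "(\<forall>k. P k) \<Longrightarrow> cntP P n = n"
  by (induction n) auto

lemma cntP_min: "\<not> P N \<Longrightarrow> (\<forall>k<N. P k) \<Longrightarrow> (\<And>k k'. \<not> P k \<Longrightarrow> k \<le> k' \<Longrightarrow> \<not> P k') \<Longrightarrow> cntP P n = min n N"
proof (induction n)
  case 0 then show ?case by simp
next
  case (Suc n)
  show ?case
  proof (cases "n < N")
    case True
    then have "P n" using Suc.prems by blast
    then show ?thesis using Suc True by simp
  next
    case False
    then have "\<not> P n" using Suc.prems(1,3) by (meson not_less)
    then show ?thesis using Suc False by simp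
  qed
qed

lemma cntP_assoc:
  assumes dc: "\<And>k k'. \<not> P k \<Longrightarrow> k \<le> k' \<Longrightarrow> \<not> P k'"
  shows "cntP P (cntP P a + b) = cntP P (a + b)"
proof (cases "\<forall>k. P k")
  case True then show ?thesis by (simp add: cntP_all)
next
  case False
  define N where "N = (LEAST k. \<not> P k)"
  have N1: "\<not> P N" unfolding N_def using False by (metis LeastI)
  have N2: "\<forall>k<N. P k" unfolding N_def using not_less_Least by blast
  show ?thesis using cntP_min[OF N1 N2 dc] by (simp add: min_def)
qed

lemma G_dc: "\<not> G d k w \<le> 1 \<Longrightarrow> k \<le> k' \<Longrightarrow> \<not> G d k' w \<le> 1"
proof -
  assume "\<not> G d k w \<le> 1" "k \<le> k'"
  then obtain v where "G d k w = Suc (Suc v)" by (metis Suc_pred' less_one not_less not_less_eq_eq zero_less_Suc)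
  then have "G d k' w = Suc (Suc v)" using fv_mono `k \<le> k'` unfolding G_def by blast
  then show ?thesis by simp
qed

lemma cnt_assoc: "cnt d w (cnt d w a + b) = cnt d w (a + b)"
  unfolding cnt_def by (rule cntP_assoc) (rule G_dc)

lemma cnt_0: "cnt d w 0 = 0" by (simp add: cnt_def)

lemma tm_assoc: "tm d (tm d x y) z = tm d x (tm d y z)"
proof -
  have c: "cnt d w (s1 + cnt d w (s2 + s3)) = cnt d w (cnt d w (s1 + s2) + s3)" for w s1 s2 s3
    using cnt_assoc[of d w "s2 + s3" s1] cnt_assoc[of d w "s1 + s2" s3] by (simp add: ac_simps)
  show ?thesis
    by (cases x rule: el_cases; cases y rule: el_cases; cases z rule: el_cases)
       (auto simp: tm_simps tm_el el_ne c)
qed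

section \<open>The instance and its Nerode algebra\<close>

definition inst :: "recf \<Rightarrow> inst" where
  "inst d = Inst CARP ADD (PP d) 0 1 [0, 1] 1
     [([], 0, 0, el (enc_recf (PP d)) 0), ([0], 1, 0, el (enc_recf (PP d)) 1)] [1]"

lemma ev_one: "eval (Cn S [Z]) xs (Suc 0)"
  using ev_const[of 1 xs] by simp

lemma carrier_inst: "carrier (inst d) = UNIV"
  unfolding carrier_def inst_def CARP_def using ev_one by auto

lemma plusI_inst: "plusI (inst d) a b = a + b"
  unfolding plusI_def inst_def using ev_ADD[of a b "[]"] eval_det by auto

lemma timesI_inst: "timesI (inst d) a b = tm d a b"
  unfolding timesI_def inst_def using ev_PP[of d a b "[]"] eval_det by auto

lemma enc_inst_inst: "enc_inst (inst d) = EI (enc_recf (PP d))"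
  unfolding enc_inst_def inst_def EI_def by simp

lemma valid_inst: "valid_instance (inst d)"
proof -
  have cb: "computable_bimonoid (inst d)"
    unfolding computable_bimonoid_def carrier_inst
    using ev_one ev_ADD[of _ _ "[]"] ev_PP[of d _ _ "[]"]
    by (simp add: inst_def CARP_def; blast)
  have sb: "strong_bimonoid (inst d)"
    unfolding strong_bimonoid_def carrier_inst plusI_inst timesI_inst Let_def
    by (auto simp: inst_def tm_simps tm_assoc)
  have ra: "ranked_alphabet (inst d)" unfolding ranked_alphabet_def inst_def by auto
  have wo: "wta_ok (inst d)" unfolding wta_ok_def carrier_inst by (auto simp: inst_def)
  have bd: "bu_deterministic (inst d)" unfolding bu_deterministic_def inst_def by auto
  show ?thesis unfolding valid_instance_def using cb sb ra wo bd by blast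
qed

primrec gtree :: "nat \<Rightarrow> tree" where
  "gtree 0 = Node 0 []"
| "gtree (Suc n) = Node 1 [gtree n]"

lemma hvec_alpha: "hvec (inst d) (Node 0 []) = [el (enc_recf (PP d)) 0]"
  by (simp add: vec_op_def sumI_def prodI_def plusI_inst timesI_inst deltaI_def tm_simps,
      simp add: inst_def tm_simps)

lemma inst_sel: "nQ (inst d) = 1" "zeroI (inst d) = 0" "oneI (inst d) = 1" "ranksI (inst d) = [0, 1]"
  by (simp_all add: inst_def)

lemma deltaI_inst: "deltaI (inst d) [] 0 0 = el (enc_recf (PP d)) 0" "deltaI (inst d) [0] 1 0 = el (enc_recf (PP d)) 1"
  "deltaI (inst d) [0] (Suc 0) 0 = el (enc_recf (PP d)) (Suc 0)"
  by (simp_all add: inst_def deltaI_def)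

lemma hvec_gamma: "hvec (inst d) (Node 1 [t]) = [tm d (hvec (inst d) t ! 0) (el (enc_recf (PP d)) 1)]"
  by (simp add: vec_op_def sumI_def prodI_def plusI_inst timesI_inst inst_sel deltaI_inst tm_simps)

lemma hvec_step: "tm d (el w (cnt d w n)) (el w 1) = el w (cnt d w (Suc n))"
  using cnt_assoc[of d w n 1] by (simp add: tm_el)

lemma hvec_wf: "wf_tree (inst d) t \<Longrightarrow> \<exists>n. hvec (inst d) t = [el (enc_recf (PP d)) (cnt d (enc_recf (PP d)) n)]"
proof (induction t)
  case (Node s ts)
  then have s: "s < 2" "length ts = [0, 1] ! s" "\<forall>t\<in>set ts. wf_tree (inst d) t"
    by (auto simp: inst_def)
  show ?case
  proof (cases s)
    case 0
    then have "ts = []" using s by simp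
    then show ?thesis using 0 hvec_alpha[of d] cnt_0[of d] by (metis hvec.simps)
  next
    case (Suc s')
    then have s1: "s = 1" using s by simp
    then obtain t where ts: "ts = [t]" using s by (cases ts) auto
    then obtain n where n: "hvec (inst d) t = [el (enc_recf (PP d)) (cnt d (enc_recf (PP d)) n)]"
      using Node.IH s by auto
    show ?thesis unfolding s1 ts hvec_gamma n using hvec_step by auto
  qed
qed

lemma gtree_props: "wf_tree (inst d) (gtree n)" "hvec (inst d) (gtree n) = [el (enc_recf (PP d)) (cnt d (enc_recf (PP d)) n)]"
proof (induction n)
  case 0
  { case 1 show ?case by (simp add: inst_def) }
  { case 2 show ?case using hvec_alpha[of d] cnt_0[of d] by simp }
next
  case (Suc n)
  { case 1 show ?case using Suc by (simp add: inst_def) }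
  { case 2 show ?case using Suc hvec_gamma[of d "gtree n"] hvec_step by simp }
qed

lemma nerode_inst: "nerode_carrier (inst d) = (\<lambda>c. [el (enc_recf (PP d)) c]) ` range (cnt d (enc_recf (PP d)))"
  unfolding nerode_carrier_def
proof
  show "hvec (inst d) ` {t. wf_tree (inst d) t} \<subseteq> (\<lambda>c. [el (enc_recf (PP d)) c]) ` range (cnt d (enc_recf (PP d)))"
    using hvec_wf by blast
  show "(\<lambda>c. [el (enc_recf (PP d)) c]) ` range (cnt d (enc_recf (PP d))) \<subseteq> hvec (inst d) ` {t. wf_tree (inst d) t}"
  proof
    fix x assume "x \<in> (\<lambda>c. [el (enc_recf (PP d)) c]) ` range (cnt d (enc_recf (PP d)))"
    then obtain n where "x = [el (enc_recf (PP d)) (cnt d (enc_recf (PP d)) n)]" by auto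
    then show "x \<in> hvec (inst d) ` {t. wf_tree (inst d) t}" using gtree_props[of d n]
      by (intro image_eqI[where x="gtree n"]) auto
  qed
qed

lemma nerode_finite_iff: "finite (nerode_carrier (inst d)) \<longleftrightarrow> finite (range (cnt d (enc_recf (PP d))))"
proof -
  have "inj (\<lambda>c. [el (enc_recf (PP d)) c])" by (rule injI) (simp add: el_inj)
  then show ?thesis unfolding nerode_inst by (simp add: finite_image_iff inj_on_subset)
qed

lemma cntP_le: "cntP P n \<le> n"
  by (induction n) auto

lemma cntP_bounded: "(\<forall>k\<ge>K. \<not> P k) \<Longrightarrow> cntP P n \<le> K"
proof (induction n)
  case 0 then show ?case by simp
next
  case (Suc n)
  show ?case
  proof (cases "n < K")
    case True then show ?thesis using cntP_le[of P n] by simp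
  next
    case False then show ?thesis using Suc by simp
  qed
qed

theorem theorem8p7:
  shows "\<not> (\<exists>d :: recf. \<forall>I. valid_instance I \<longrightarrow>
            (\<exists>v. eval d [enc_inst I] v \<and> (v = 0 \<longleftrightarrow> finite (nerode_carrier I))))"
proof
  assume "\<exists>d :: recf. \<forall>I. valid_instance I \<longrightarrow>
            (\<exists>v. eval d [enc_inst I] v \<and> (v = 0 \<longleftrightarrow> finite (nerode_carrier I)))"
  then obtain d where d: "\<forall>I. valid_instance I \<longrightarrow>
            (\<exists>v. eval d [enc_inst I] v \<and> (v = 0 \<longleftrightarrow> finite (nerode_carrier I)))" by blast
  define w where "w = enc_recf (PP d)"
  have "\<exists>v. eval d [enc_inst (inst d)] v \<and> (v = 0 \<longleftrightarrow> finite (nerode_carrier (inst d)))"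
    using d valid_inst[of d] by blast
  then obtain v where v: "eval d [EI w] v" "v = 0 \<longleftrightarrow> finite (range (cnt d w))"
    unfolding enc_inst_inst nerode_finite_iff w_def by blast
  show False
  proof (cases "v = 0")
    case True
    have "\<forall>k. G d k w \<le> 1"
    proof
      fix k show "G d k w \<le> 1"
      proof (cases "G d k w")
        case (Suc v')
        then have "eval d [EI w] v'" unfolding G_def by (rule fv_sound)
        then have "v' = 0" using eval_det[OF v(1)] True by simp
        then show ?thesis using Suc by simp
      qed simp
    qed
    then have "cnt d w = id" unfolding cnt_def by (intro ext) (simp add: cntP_all)
    then show False using v True by simp
  next
    case False
    obtain K where K: "G d K w = Suc v" using fv_complete[OF v(1)] unfolding G_def by blast
    have "\<forall>k\<ge>K. \<not> G d k w \<le> 1"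
    proof (intro allI impI)
      fix k assume "K \<le> k"
      then have "G d k w = Suc v" using fv_mono[of d K "[EI w]" v k] K unfolding G_def by simp
      then show "\<not> G d k w \<le> 1" using False by simp
    qed
    then have "\<forall>n. cnt d w n \<le> K" unfolding cnt_def by (simp add: cntP_bounded)
    then have "range (cnt d w) \<subseteq> {..K}" by auto
    then have "finite (range (cnt d w))" using finite_subset by blast
    then show False using v False by simp
  qed
qed

end
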